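(* Let $\mathcal{T}$ be an $l$-eligible microdata table and run the three-phase algorithm described in the context (arbitrary tie-breaking). In each round of Phase Three, the pillar height $h(R)$ of the residue set increases by at most $l-2$.
   Context: A microdata table $\mathcal{T}$ is a multiset of $n$ tuples with values on $d$ quasi-identifier (QI) attributes and one sensitive attribute (SA). For a multiset $Q$ and SA value $v$, $h(Q,v)$ is the number of tuples in $Q$ with SA value $v$, $h(Q)=\max_v h(Q,v)$, pillars of $Q$ are the $v$ with $h(Q,v)=h(Q)$; $Q$ is $l$-eligible if $|Q|\ge l\cdot h(Q)$. Let $Q_1,\dots,Q_s$ be the maximal classes of tuples of $\mathcal{T}$ with identical values on all QI attributes; the algorithm only moves tuples from these groups into a residue set $R$ (initially empty), and terminates as soon as $R$ becomes $l$-eligible. Terminology (w.r.t. current state): a group $Q$ is thin if $|Q|=l\cdot h(Q)$, fat if $|Q|\ge l\cdot h(Q)+1$; conflicting if some pillar of $Q$ is a pillar of $R$ (its conflicting pillars, set $C(Q)$); dead if thin and conflicting, alive otherwise; an SA value $v$ is alive if some alive group $Q$ has $h(Q,v)>0$. Phase One: for each $i$, while $Q_i$ is not $l$-eligible, move a tuple of a pillar of $Q_i$ to $R$. Phase Two: repeat: if no SA value is alive, go to Phase Three; else pick an alive SA value $v$ minimizing $h(R,v)$ and an alive group $Q$ with $h(Q,v)>0$; if $Q$ is fat move one tuple with SA value $v$ to $R$, if thin move one tuple of each pillar of $Q$ to $R$. Phase Three proceeds in rounds. Step 1: let $P$ be the set of pillars of $R$ and $S=\emptyset$; while $P\ne\emptyset$,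 pick a group $Q$ minimizing $|C(Q)\cap P|$, add it to $S$, and set $P\leftarrow P\cap C(Q)$; then for each $Q\in S$ move one tuple of each pillar of $Q$ to $R$. Step 2: for each group $Q$ that is now alive, repeat until $Q$ is dead: if $Q$ is fat, move to $R$ a tuple of $Q$ whose SA value is not a pillar of $R$; if $Q$ is thin and non-conflicting, move one tuple of each pillar of $Q$ to $R$. All ties are broken arbitrarily. *)

theory Defs
  imports "HOL-Library.Multiset"
begin

text \<open>A multiset of SA values. h(Q,v) is count Q v.\<close>

definition hgt :: "'v multiset \<Rightarrow> nat" where
  "hgt Q = Max (range (count Q))"

definition pillars :: "'v multiset \<Rightarrow> 'v set" where
  "pillars Q = {v. count Q v = hgt Q}"

definition eligible :: "nat \<Rightarrow> 'v multiset \<Rightarrow> bool" where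
  "eligible l Q \<longleftrightarrow> size Q \<ge> l * hgt Q"

definition thin :: "nat \<Rightarrow> 'v multiset \<Rightarrow> bool" where
  "thin l Q \<longleftrightarrow> size Q = l * hgt Q"

definition fat :: "nat \<Rightarrow> 'v multiset \<Rightarrow> bool" where
  "fat l Q \<longleftrightarrow> size Q \<ge> l * hgt Q + 1"

definition cpill :: "'v multiset \<Rightarrow> 'v multiset \<Rightarrow> 'v set" where
  "cpill Q R = pillars Q \<inter> pillars R"

definition conflicting :: "'v multiset \<Rightarrow> 'v multiset \<Rightarrow> bool" where
  "conflicting Q R \<longleftrightarrow> cpill Q R \<noteq> {}"

definition dead :: "nat \<Rightarrow> 'v multiset \<Rightarrow> 'v multiset \<Rightarrow> bool" where
  "dead l Q R \<longleftrightarrow> thin l Q \<and> conflicting Q R"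

text \<open>A state is a pair (G, R): G q is the current group of tuples with QI value q
  (as multiset of SA values), R is the residue set (multiset of SA values).
  The groups of a state are the nonempty G q.\<close>

type_synonym ('q,'v) state = "('q \<Rightarrow> 'v multiset) \<times> 'v multiset"

definition grp :: "('q,'v) state \<Rightarrow> 'q \<Rightarrow> 'v multiset" where
  "grp st = fst st"

definition res :: "('q,'v) state \<Rightarrow> 'v multiset" where
  "res st = snd st"

definition groups :: "('q,'v) state \<Rightarrow> 'q set" where
  "groups st = {q. grp st q \<noteq> {#}}"

definition init_state :: "('q \<times> 'v) multiset \<Rightarrow> ('q,'v) state" where
  "init_state T = ((\<lambda>q. image_mset snd (filter_mset (\<lambda>t. fst t = q) T)), {#})"

definition mv :: "'q \<Rightarrow> 'v \<Rightarrow> ('q,'v) state \<Rightarrow> ('q,'v) state" where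
  "mv q v st = ((grp st)(q := grp st q - {#v#}), res st + {#v#})"

definition alive_grp :: "nat \<Rightarrow> ('q,'v) state \<Rightarrow> 'q \<Rightarrow> bool" where
  "alive_grp l st q \<longleftrightarrow> q \<in> groups st \<and> \<not> dead l (grp st q) (res st)"

definition alive_val :: "nat \<Rightarrow> ('q,'v) state \<Rightarrow> 'v \<Rightarrow> bool" where
  "alive_val l st v \<longleftrightarrow> (\<exists>q. alive_grp l st q \<and> count (grp st q) v > 0)"

text \<open>Moving a sequence of tuples one at a time, terminating (flag True) as soon as
  R becomes l-eligible.\<close>
inductive moves :: "nat \<Rightarrow> ('q,'v) state \<Rightarrow> ('q \<times> 'v) list \<Rightarrow> ('q,'v) state \<Rightarrow> bool \<Rightarrow> bool"
  for l where
  moves_nil: "moves l st [] st False"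
| moves_stop: "\<lbrakk> v \<in># grp st q; eligible l (res (mv q v st)) \<rbrakk>
     \<Longrightarrow> moves l st ((q,v) # ms) (mv q v st) True"
| moves_cont: "\<lbrakk> v \<in># grp st q; \<not> eligible l (res (mv q v st));
     moves l (mv q v st) ms st' b \<rbrakk>
     \<Longrightarrow> moves l st ((q,v) # ms) st' b"

definition pillar_list :: "'v multiset \<Rightarrow> 'v list \<Rightarrow> bool" where
  "pillar_list Q ps \<longleftrightarrow> distinct ps \<and> set ps = pillars Q"

inductive ph1_step :: "nat \<Rightarrow> ('q,'v) state \<Rightarrow> ('q,'v) state \<Rightarrow> bool" for l where
  "\<lbrakk> \<not> eligible l (grp st q); v \<in> pillars (grp st q) \<rbrakk> \<Longrightarrow> ph1_step l st (mv q v st)"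

inductive ph2_step :: "nat \<Rightarrow> ('q,'v) state \<Rightarrow> ('q,'v) state \<Rightarrow> bool \<Rightarrow> bool" for l where
  ph2_fat: "\<lbrakk> alive_val l st v; \<forall>u. alive_val l st u \<longrightarrow> count (res st) v \<le> count (res st) u;
     alive_grp l st q; count (grp st q) v > 0; fat l (grp st q);
     moves l st [(q,v)] st' b \<rbrakk> \<Longrightarrow> ph2_step l st st' b"
| ph2_thin: "\<lbrakk> alive_val l st v; \<forall>u. alive_val l st u \<longrightarrow> count (res st) v \<le> count (res st) u;
     alive_grp l st q; count (grp st q) v > 0; thin l (grp st q);
     pillar_list (grp st q) ps; moves l st (map (Pair q) ps) st' b \<rbrakk> \<Longrightarrow> ph2_step l st st' b"

text \<open>Step 1 selection loop: select st P S S' -- starting with current P and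
  accumulated S, the loop ends with S'.\<close>
inductive select :: "('q,'v) state \<Rightarrow> 'v set \<Rightarrow> 'q set \<Rightarrow> 'q set \<Rightarrow> bool" for st where
  sel_done: "select st {} S S"
| sel_pick: "\<lbrakk> P \<noteq> {}; q \<in> groups st;
     \<forall>q' \<in> groups st. card (cpill (grp st q) (res st) \<inter> P) \<le> card (cpill (grp st q') (res st) \<inter> P);
     select st (P \<inter> cpill (grp st q) (res st)) (insert q S) S' \<rbrakk>
     \<Longrightarrow> select st P S S'"

definition step1_moves :: "('q,'v) state \<Rightarrow> 'q set \<Rightarrow> ('q \<times> 'v) list \<Rightarrow> bool" where
  "step1_moves st S ms \<longleftrightarrow> (\<exists>qs ps. distinct qs \<and> set qs = S \<and>
      (\<forall>q \<in> S. pillar_list (grp st q) (ps q)) \<and>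
      ms = concat (map (\<lambda>q. map (Pair q) (ps q)) qs))"

text \<open>Step 2 processing of a single group q: repeat until q is dead.\<close>
inductive proc :: "nat \<Rightarrow> 'q \<Rightarrow> ('q,'v) state \<Rightarrow> ('q,'v) state \<Rightarrow> bool \<Rightarrow> bool" for l q where
  proc_dead: "dead l (grp st q) (res st) \<Longrightarrow> proc l q st st False"
| proc_fat_stop: "\<lbrakk> \<not> dead l (grp st q) (res st); fat l (grp st q);
     v \<in># grp st q; v \<notin> pillars (res st); moves l st [(q,v)] st' True \<rbrakk>
     \<Longrightarrow> proc l q st st' True"
| proc_fat_cont: "\<lbrakk> \<not> dead l (grp st q) (res st); fat l (grp st q);
     v \<in># grp st q; v \<notin> pillars (res st); moves l st [(q,v)] st1 False;
     proc l q st1 st' b \<rbrakk>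
     \<Longrightarrow> proc l q st st' b"
| proc_thin_stop: "\<lbrakk> thin l (grp st q); \<not> conflicting (grp st q) (res st);
     pillar_list (grp st q) ps; moves l st (map (Pair q) ps) st' True \<rbrakk>
     \<Longrightarrow> proc l q st st' True"
| proc_thin_cont: "\<lbrakk> thin l (grp st q); \<not> conflicting (grp st q) (res st);
     pillar_list (grp st q) ps; moves l st (map (Pair q) ps) st1 False;
     proc l q st1 st' b \<rbrakk>
     \<Longrightarrow> proc l q st st' b"

inductive proc_list :: "nat \<Rightarrow> 'q list \<Rightarrow> ('q,'v) state \<Rightarrow> ('q,'v) state \<Rightarrow> bool \<Rightarrow> bool" for l where
  pl_nil: "proc_list l [] st st False"
| pl_stop: "proc l q st st' True \<Longrightarrow> proc_list l (q # qs) st st' True"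
| pl_cont: "\<lbrakk> proc l q st st1 False; proc_list l qs st1 st' b \<rbrakk>
     \<Longrightarrow> proc_list l (q # qs) st st' b"

text \<open>One round of Phase Three: from st to st'; the flag says whether the algorithm
  terminated during the round.\<close>
inductive round :: "nat \<Rightarrow> ('q,'v) state \<Rightarrow> ('q,'v) state \<Rightarrow> bool \<Rightarrow> bool" for l where
  round_stop1: "\<lbrakk> select st (pillars (res st)) {} S; step1_moves st S ms;
     moves l st ms st' True \<rbrakk> \<Longrightarrow> round l st st' True"
| round_full: "\<lbrakk> select st (pillars (res st)) {} S; step1_moves st S ms;
     moves l st ms st1 False;
     distinct gs; set gs = {q. alive_grp l st1 q};
     proc_list l gs st1 st' b \<rbrakk> \<Longrightarrow> round l st st' b"

inductive p3_start :: "nat \<Rightarrow> ('q \<times> 'v) multiset \<Rightarrow> ('q,'v) state \<Rightarrow> bool" for l T where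
  p3_first: "\<lbrakk> (ph1_step l)\<^sup>*\<^sup>* (init_state T) st1; \<forall>q. eligible l (grp st1 q);
     \<not> eligible l (res st1);
     (\<lambda>s s'. ph2_step l s s' False)\<^sup>*\<^sup>* st1 st2;
     \<forall>v. \<not> alive_val l st2 v \<rbrakk> \<Longrightarrow> p3_start l T st2"
| p3_next: "\<lbrakk> p3_start l T st; round l st st' False \<rbrakk> \<Longrightarrow> p3_start l T st'"

end

theory Submission
  imports Defs
begin

lemma fin_range_count: "finite (range (count (Q::'v multiset)))"
proof -
  have "range (count Q) \<subseteq> insert 0 (count Q ` set_mset Q)"
    by (auto simp: image_iff)
  thus ?thesis by (rule finite_subset) simp
qed

lemma count_le_hgt: "count Q v \<le> hgt Q"
  unfolding hgt_def using fin_range_count by (intro Max_ge) auto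

lemma hgt_attained: "\<exists>v. count Q v = hgt Q"
proof -
  have "hgt Q \<in> range (count Q)" unfolding hgt_def using fin_range_count
    by (intro Max_in) auto
  thus ?thesis by auto
qed

lemma hgt_le: "(\<And>v. count Q v \<le> k) \<Longrightarrow> hgt Q \<le> k"
  using hgt_attained by metis

lemma noneli_facts:
  assumes "\<not> eligible l R"
  shows "0 < hgt R" "finite (pillars R)" "pillars R \<noteq> {}" "card (pillars R) < l"
proof -
  show h0: "0 < hgt R"
  proof (rule ccontr)
    assume "\<not> 0 < hgt R" thus False using assms by (auto simp: eligible_def)
  qed
  have sub: "pillars R \<subseteq> set_mset R" using h0 by (auto simp: pillars_def) (metis count_inI less_nat_zero_code)
  thus fin: "finite (pillars R)" by (rule finite_subset) simp
  show "pillars R \<noteq> {}" using hgt_attained[of R] by (auto simp: pillars_def)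
  have "card (pillars R) * hgt R = (\<Sum>v\<in>pillars R. count R v)"
    by (simp add: pillars_def)
  also have "\<dots> \<le> (\<Sum>v\<in>set_mset R. count R v)"
    by (rule sum_mono2) (use sub in auto)
  also have "\<dots> = size R" by (simp add: size_multiset_overloaded_eq)
  also have "\<dots> < l * hgt R" using assms by (simp add: eligible_def)
  finally show "card (pillars R) < l" using h0 by simp
qed

lemma moves_ne: "moves l st ms st' b \<Longrightarrow> \<not> b \<Longrightarrow> \<not> eligible l (res st) \<Longrightarrow> \<not> eligible l (res st')"
  by (induction rule: moves.induct) auto

lemma ph2_ne: "ph2_step l st st' False \<Longrightarrow> \<not> eligible l (res st) \<Longrightarrow> \<not> eligible l (res st')"
  by (cases rule: ph2_step.cases) (auto dest: moves_ne)

lemma ph2s_ne: "(\<lambda>s s'. ph2_step l s s' False)\<^sup>*\<^sup>* st st' \<Longrightarrow> \<not> eligible l (res st) \<Longrightarrow> \<not> eligible l (res st')"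
  by (induction rule: rtranclp_induct) (auto dest: ph2_ne)

lemma proc_ne: "proc l q st st' b \<Longrightarrow> \<not> b \<Longrightarrow> \<not> eligible l (res st) \<Longrightarrow> \<not> eligible l (res st')"
  by (induction rule: proc.induct) (auto dest: moves_ne)

lemma proc_list_ne: "proc_list l qs st st' b \<Longrightarrow> \<not> b \<Longrightarrow> \<not> eligible l (res st) \<Longrightarrow> \<not> eligible l (res st')"
  by (induction rule: proc_list.induct) (auto dest: proc_ne)

lemma round_ne0: "round l st st' b \<Longrightarrow> \<not> b \<Longrightarrow> \<not> eligible l (res st) \<Longrightarrow> \<not> eligible l (res st')"
  by (induction rule: round.induct) (auto dest: moves_ne proc_list_ne)

lemma round_ne: "round l st st' False \<Longrightarrow> \<not> eligible l (res st) \<Longrightarrow> \<not> eligible l (res st')"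
  using round_ne0 by blast

lemma p3_ne: "p3_start l T st \<Longrightarrow> \<not> eligible l (res st)"
  by (induction rule: p3_start.induct) (auto dest: ph2s_ne round_ne)

lemma moves_sub: "moves l st ms st' b \<Longrightarrow> res st' \<subseteq># res st + mset (map snd ms)"
proof (induction rule: moves.induct)
  case (moves_stop v st q ms)
  then show ?case by (auto simp: mv_def res_def)
next
  case (moves_cont v st q ms st' b)
  then show ?case by (auto simp: mv_def res_def add.assoc subset_mset.order_trans)
qed simp

lemma select_mono: "select st P S S' \<Longrightarrow> S \<subseteq> S'"
  by (induction rule: select.induct) auto

lemma select_stuck: "select st P S S' \<Longrightarrow> P \<noteq> {} \<Longrightarrow> (\<forall>q\<in>groups st. P \<subseteq> cpill (grp st q) (res st)) \<Longrightarrow> False"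
  by (induction rule: select.induct) (auto simp: Int_absorb2)

lemma select_card: "select st P S S' \<Longrightarrow> finite P \<Longrightarrow> finite S \<Longrightarrow> finite S' \<and> card S' \<le> card S + card P"
proof (induction rule: select.induct)
  case (sel_done S)
  then show ?case by simp
next
  case (sel_pick P q S S')
  show ?case
  proof (cases "P \<subseteq> cpill (grp st q) (res st)")
    case True
    have "\<forall>q'\<in>groups st. P \<subseteq> cpill (grp st q') (res st)"
    proof
      fix q' assume q': "q' \<in> groups st"
      have "card P \<le> card (cpill (grp st q') (res st) \<inter> P)"
        using sel_pick(3) q' True by (metis Int_absorb1 inf_commute)
      hence "cpill (grp st q') (res st) \<inter> P = P"
        using sel_pick.prems(1) by (meson card_seteq inf_le2)
      thus "P \<subseteq> cpill (grp st q') (res st)" by blast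
    qed
    with True sel_pick(4) sel_pick(1) have False
      using select_stuck by (metis Int_absorb2)
    thus ?thesis ..
  next
    case False
    have lt: "card (P \<inter> cpill (grp st q) (res st)) < card P"
      using False sel_pick.prems(1) by (meson Int_lower1 card_seteq le_less_linear le_iff_inf)
    have "finite S' \<and> card S' \<le> card (insert q S) + card (P \<inter> cpill (grp st q) (res st))"
      using sel_pick by simp
    moreover have "card (insert q S) \<le> card S + 1" using sel_pick.prems(2) by (simp add: card_insert_if)
    ultimately show ?thesis using lt by linarith
  qed
qed

lemma select_miss: "select st P S S' \<Longrightarrow> v \<in> P \<Longrightarrow> \<exists>q\<in>S'. v \<notin> cpill (grp st q) (res st)"
proof (induction rule: select.induct)
  case (sel_pick P q S S')
  then show ?case using select_mono[OF sel_pick(4)] by (cases "v \<in> cpill (grp st q) (res st)") auto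
qed simp

lemma hgt_add_ok:
  assumes "R' \<subseteq># R + M" and "\<And>u. count M u > 0 \<Longrightarrow> count M u = 1 \<and> u \<notin> pillars R"
  shows "hgt R' \<le> hgt R"
proof (rule hgt_le)
  fix u
  have "count R' u \<le> count R u + count M u" using mset_subset_eq_count[OF assms(1), of u] by simp
  moreover have "count R u \<le> hgt R" by (rule count_le_hgt)
  moreover have "count M u > 0 \<Longrightarrow> count R u < hgt R"
    using assms(2)[of u] count_le_hgt[of R u] by (auto simp: pillars_def)
  moreover have "count M u > 0 \<Longrightarrow> count M u = 1" using assms(2) by blast
  moreover have "\<not> count M u > 0 \<Longrightarrow> count M u = 0" using not_gr0 by blast
  ultimately show "count R' u \<le> hgt R" by (cases "count M u > 0") linarith+
qed

lemma proc_hgt: "proc l q st st' b \<Longrightarrow> hgt (res st') \<le> hgt (res st)"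
proof (induction rule: proc.induct)
  case (proc_fat_stop st v st')
  then show ?case by (intro hgt_add_ok[OF moves_sub[OF proc_fat_stop(5)]]) (auto split: if_splits)
next
  case (proc_fat_cont st v st1 st' b)
  have "hgt (res st1) \<le> hgt (res st)"
    using proc_fat_cont by (intro hgt_add_ok[OF moves_sub[OF proc_fat_cont(5)]]) (auto split: if_splits)
  then show ?case using proc_fat_cont by simp
next
  case (proc_thin_stop st ps st')
  have "pillars (grp st q) \<inter> pillars (res st) = {}" using proc_thin_stop(2)
    by (simp add: conflicting_def cpill_def)
  then show ?case using proc_thin_stop(3)
    by (intro hgt_add_ok[OF moves_sub[OF proc_thin_stop(4)]])
       (auto simp: pillar_list_def distinct_count_atmost_1 comp_def split: if_splits)
next
  case (proc_thin_cont st ps st1 st' b)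
  have "pillars (grp st q) \<inter> pillars (res st) = {}" using proc_thin_cont(2)
    by (simp add: conflicting_def cpill_def)
  hence "hgt (res st1) \<le> hgt (res st)" using proc_thin_cont(3)
    by (intro hgt_add_ok[OF moves_sub[OF proc_thin_cont(4)]])
       (auto simp: pillar_list_def distinct_count_atmost_1 comp_def split: if_splits)
  then show ?case using proc_thin_cont by simp
qed simp

lemma proc_list_hgt: "proc_list l qs st st' b \<Longrightarrow> hgt (res st') \<le> hgt (res st)"
  by (induction rule: proc_list.induct) (auto dest: proc_hgt)

lemma map_snd_concat: "map snd (concat (map (\<lambda>q. map (Pair q) (ps q)) qs)) = concat (map ps qs)"
  by (induction qs) (auto simp: comp_def)

lemma count_concat: "distinct qs \<Longrightarrow> (\<forall>q\<in>set qs. distinct (f q)) \<Longrightarrow>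
  count (mset (concat (map f qs))) v = card {q\<in>set qs. v \<in> set (f q)}"
proof (induction qs)
  case (Cons a qs)
  have e: "{q\<in>set (a#qs). v \<in> set (f q)} = (if v \<in> set (f a) then insert a {q\<in>set qs. v \<in> set (f q)} else {q\<in>set qs. v \<in> set (f q)})"
    by auto
  have ih: "count (mset (concat (map f qs))) v = card {q\<in>set qs. v \<in> set (f q)}" using Cons by simp
  have c1: "count (mset (f a)) v = (if v \<in> set (f a) then 1 else 0)"
    using Cons.prems(2) distinct_count_atmost_1 by (metis list.set_intros(1))
  have na: "a \<notin> {q\<in>set qs. v \<in> set (f q)}" using Cons.prems(1) by simp
  show ?case unfolding e using ih c1 na by (simp add: card_insert_if)
qed simp

lemma step1_hgt:
  assumes ne: "\<not> eligible l (res st)"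
    and sel: "select st (pillars (res st)) {} S"
    and s1: "step1_moves st S ms"
    and mv: "moves l st ms st1 b"
  shows "hgt (res st1) + 2 \<le> hgt (res st) + l"
proof -
  define R where "R = res st"
  define h where "h = hgt R"
  define P where "P = pillars R"
  have h0: "0 < h" and finP: "finite P" and cP: "card P < l"
    using noneli_facts[OF ne] by (auto simp: h_def P_def R_def)
  have "finite S \<and> card S \<le> card {} + card P" using select_card[OF sel] finP by (simp add: P_def R_def)
  hence finS: "finite S" and cS: "card S \<le> card P" by auto
  obtain qs ps where qs: "distinct qs" "set qs = S" and pl: "\<forall>q\<in>S. pillar_list (grp st q) (ps q)"
    and ms: "ms = concat (map (\<lambda>q. map (Pair q) (ps q)) qs)"
    using s1 unfolding step1_moves_def by blast
  have cnt: "count (mset (map snd ms)) v = card {q\<in>S. v \<in> pillars (grp st q)}" for v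
  proof -
    have "count (mset (map snd ms)) v = count (mset (concat (map ps qs))) v"
      by (simp add: ms map_snd_concat)
    also have "\<dots> = card {q\<in>set qs. v \<in> set (ps q)}"
      using qs pl by (intro count_concat) (auto simp: pillar_list_def)
    also have "{q\<in>set qs. v \<in> set (ps q)} = {q\<in>S. v \<in> pillars (grp st q)}"
      using qs pl by (auto simp: pillar_list_def)
    finally show ?thesis .
  qed
  have "hgt (res st1) \<le> h + l - 2"
  proof (rule hgt_le)
    fix v
    have c1: "count (res st1) v \<le> count R v + card {q\<in>S. v \<in> pillars (grp st q)}"
      using mset_subset_eq_count[OF moves_sub[OF mv], of v] cnt[of v] by (simp add: R_def)
    show "count (res st1) v \<le> h + l - 2"
    proof (cases "v \<in> P")
      case True
      obtain q where q: "q \<in> S" "v \<notin> cpill (grp st q) (res st)"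
        using select_miss[OF sel] True by (auto simp: P_def R_def)
      hence "v \<notin> pillars (grp st q)" using True by (auto simp: cpill_def P_def R_def)
      hence "{q\<in>S. v \<in> pillars (grp st q)} \<subset> S" using q by auto
      hence "card {q\<in>S. v \<in> pillars (grp st q)} < card S" by (rule psubset_card_mono[OF finS])
      moreover have "count R v = h" using True by (simp add: P_def pillars_def h_def)
      ultimately show ?thesis using c1 cS cP by linarith
    next
      case False
      have "count R v \<le> h" unfolding h_def by (rule count_le_hgt)
      with False have "count R v < h" by (auto simp: P_def pillars_def h_def)
      moreover have "card {q\<in>S. v \<in> pillars (grp st q)} \<le> card S" using finS by (intro card_mono) auto
      ultimately show ?thesis using c1 cS cP by linarith
    qed
  qed
  moreover have "P \<noteq> {}" using noneli_facts(3)[OF ne] by (simp add: P_def R_def)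
  hence "0 < card P" using finP by (simp add: card_gt_0_iff)
  hence "2 \<le> l" using cP by linarith
  ultimately show ?thesis by (simp add: h_def R_def)
qed

theorem lemma8:
  fixes T :: "('q \<times> 'v) multiset" and l :: nat
  assumes "eligible l (image_mset snd T)"
    and "p3_start l T st"
    and "round l st st' b"
  shows "int (hgt (res st')) \<le> int (hgt (res st)) + int l - 2"
proof -
  have ne: "\<not> eligible l (res st)" using p3_ne[OF assms(2)] .
  have "hgt (res st') + 2 \<le> hgt (res st) + l"
    using assms(3)
  proof (cases rule: round.cases)
    case (round_stop1 S ms)
    then show ?thesis using step1_hgt[OF ne] by blast
  next
    case (round_full S ms st1 gs)
    have "hgt (res st1) + 2 \<le> hgt (res st) + l" using step1_hgt[OF ne] round_full by blast
    moreover have "hgt (res st') \<le> hgt (res st1)" using proc_list_hgt round_full by blast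
    ultimately show ?thesis by linarith
  qed
  thus ?thesis by linarith
qed

end
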